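(* Let $L, L_1, M, M_1$ be linear partial differential operators in $\mathbb{R}^n$ (coefficients in $\mathbf{F}$) satisfying $M_1L = L_1M$. Put $X_2 = M$ and $\omega = M_1 - M$. If there exists a differential operator $X_1$ satisfying $[X_1,X_2] - \omega X_1 = L - L_1$, then $L$ and $L_1$ are connected by an Intertwining Laplace Transformation: with $H = X_1X_2 - L$ one has $L = X_1X_2 - H$, $[H,X_2] = \omega H$ (so $\omega = -[X_2,H]H^{-1}$ when $H\ne0$, and $\omega$ is a differential operator), and $L_1 = X_2X_1 + \omega X_1 - H$.
   Context: $\mathbf{F}$ is a differential field of functions of $x_1,\ldots,x_n$; operators lie in $\mathbf{F}[D_{x_1},\ldots,D_{x_n}]$; $[A,B]=AB-BA$; $H^{-1}$ is taken in the skew Ore field of fractions of this ring. Operators $L, L_1$ are connected by an Intertwining Laplace Transformation if $L = X_1X_2 - H$, $L_1 = X_2X_1+\omega X_1 - H$ with $\omega=-[X_2,H]H^{-1}$ a differential operator. *)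

theory Defs
  imports Main
begin

(* The ring F[D_x1,...,D_xn] of linear partial differential operators is modelled
   abstractly as an arbitrary (not necessarily commutative) ring with unit. *)

definition commutator :: "'a::ring \<Rightarrow> 'a \<Rightarrow> 'a" where
  "commutator A B = A * B - B * A"

(* An injective unital ring homomorphism into a division ring; the embedding of an
   Ore domain into its skew field of fractions is such a map. *)
definition ring_embedding :: "('a::ring_1 \<Rightarrow> 'b::division_ring) \<Rightarrow> bool" where
  "ring_embedding \<phi> \<longleftrightarrow> inj \<phi> \<and> \<phi> 1 = 1 \<and>
     (\<forall>x y. \<phi> (x + y) = \<phi> x + \<phi> y) \<and> (\<forall>x y. \<phi> (x * y) = \<phi> x * \<phi> y)"

definition ILT_connected :: "'a::ring \<Rightarrow> 'a \<Rightarrow> 'a \<Rightarrow> 'a \<Rightarrow> 'a \<Rightarrow> 'a \<Rightarrow> bool" where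
  "ILT_connected L L1 X1 X2 H \<omega> \<longleftrightarrow>
     L = X1 * X2 - H \<and> L1 = X2 * X1 + \<omega> * X1 - H \<and> commutator H X2 = \<omega> * H"

end

theory Submission
  imports Defs
begin

lemma emb_basic:
  assumes "ring_embedding (\<phi> :: 'a::ring_1 \<Rightarrow> 'b::division_ring)"
  shows "\<phi> 0 = 0" "\<phi> (x - y) = \<phi> x - \<phi> y" "\<phi> (x * y) = \<phi> x * \<phi> y" "\<phi> (- x) = - \<phi> x"
proof -
  have add: "\<And>x y. \<phi> (x + y) = \<phi> x + \<phi> y" and mul: "\<And>x y. \<phi> (x * y) = \<phi> x * \<phi> y"
    using assms unfolding ring_embedding_def by auto
  show z: "\<phi> 0 = 0" using add[of 0 0] by simp
  show n: "\<phi> (- x) = - \<phi> x" using add[of x "-x"] z by (metis add.commute add_right_cancel add.right_inverse)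
  have "\<phi> (x - y) = \<phi> (x + - y)" by simp
  also have "\<dots> = \<phi> x - \<phi> y" using add[of x "-y"] add[of y "-y"] z
    by (metis add_right_cancel add.right_inverse diff_conv_add_uminus add.commute)
  finally show "\<phi> (x - y) = \<phi> x - \<phi> y" .
  show "\<phi> (x * y) = \<phi> x * \<phi> y" by (rule mul)
qed

theorem proposition1:
  fixes L L1 M M1 X1 X2 \<omega> H :: "'a::ring_1"
  assumes intertw: "M1 * L = L1 * M"
    and X2_def: "X2 = M"
    and omega_def: "\<omega> = M1 - M"
    and X1: "commutator X1 X2 - \<omega> * X1 = L - L1"
    and H_def: "H = X1 * X2 - L"
  shows "ILT_connected L L1 X1 X2 H \<omega> \<and>
         (\<forall>\<phi> :: 'a \<Rightarrow> 'b::division_ring. ring_embedding \<phi> \<longrightarrow> H \<noteq> 0 \<longrightarrow>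
            \<phi> \<omega> = - \<phi> (commutator X2 H) * inverse (\<phi> H))"
proof -
  have L1eq: "L1 = L - X1 * M + M1 * X1"
    using X1 unfolding commutator_def X2_def omega_def
    by (simp add: algebra_simps eq_diff_eq diff_eq_eq)
  have e1: "L = X1 * X2 - H" using H_def by simp
  have e2: "L1 = X2 * X1 + \<omega> * X1 - H"
    using L1eq unfolding H_def X2_def omega_def by (simp add: algebra_simps)
  have e3: "commutator H X2 = \<omega> * H"
  proof -
    have "commutator H X2 - \<omega> * H = (X1 * M - L - M1 * X1 + L1) * M + (M1 * L - L1 * M)"
      unfolding commutator_def H_def X2_def omega_def by (simp add: algebra_simps)
    also have "\<dots> = 0" using L1eq intertw by simp
    finally show ?thesis by simp
  qed
  have part2: "\<phi> \<omega> = - \<phi> (commutator X2 H) * inverse (\<phi> H)"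
    if emb: "ring_embedding (\<phi> :: 'a \<Rightarrow> 'b::division_ring)" and hz: "H \<noteq> 0" for \<phi>
  proof -
    have "\<phi> H \<noteq> 0" using emb hz emb_basic(1)[OF emb] unfolding ring_embedding_def inj_def
      by metis
    have "commutator X2 H = - (\<omega> * H)" using e3 unfolding commutator_def
      by (metis minus_diff_eq)
    hence "- \<phi> (commutator X2 H) = \<phi> \<omega> * \<phi> H"
      using emb_basic[OF emb] by simp
    thus ?thesis using \<open>\<phi> H \<noteq> 0\<close> by (simp add: mult.assoc)
  qed
  show ?thesis using e1 e2 e3 part2 unfolding ILT_connected_def by blast
qed

end
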